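(* Along a $C^1$ curve $z(s)$ with tangent $v^\mu$ in a Lorentzian 4-manifold, let $p^\mu(s)$, antisymmetric $S^{\mu\nu}(s)$, a timelike unit vector $u^\mu(s)$ and a scalar $M(s)>0$ be differentiable, with $p^\mu=Mu^\mu$, $p_\nu S^{\mu\nu}=0$ and $u_\kappa v^\kappa=-1$. Define $F^\nu$ and $L^{\kappa\lambda}$ by $$F^\nu=\frac{\delta p^\nu}{\delta s}-\tfrac12 S^{\kappa\lambda}v^\mu R_{\kappa\lambda\mu}{}^{\nu},\qquad L^{\kappa\lambda}=\frac{\delta S^{\kappa\lambda}}{\delta s}-2p^{[\kappa}v^{\lambda]},$$ and assume $M^2+\tfrac14 S^{\kappa\lambda}S^{\tau\nu}R_{\kappa\lambda\tau\nu}\neq0$. Then $$Mv^\mu=p^\mu-u_\nu L^{\mu\nu}-\frac{S^{\mu\nu}\Big[MF_\nu-\tfrac12 S^{\kappa\lambda}\big(p^\tau-u_\sigma L^{\tau\sigma}\big)R_{\kappa\lambda\nu\tau}\Big]}{M^2+\tfrac14 S^{\kappa\lambda}S^{\tau\nu}R_{\kappa\lambda\tau\nu}} .$$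
   Context: $\delta/\delta s=v^\mu\nabla_\mu$; $R_{\kappa\lambda\mu\nu}$ is the Riemann tensor with the algebraic symmetries $R_{\kappa\lambda\mu\nu}=-R_{\lambda\kappa\mu\nu}=-R_{\kappa\lambda\nu\mu}=R_{\mu\nu\kappa\lambda}$ and $R_{\kappa[\lambda\mu\nu]}=0$; indices lowered with the metric; $A^{[\kappa}B^{\lambda]}=\tfrac12(A^\kappa B^\lambda-A^\lambda B^\kappa)$. *)

theory Defs
  imports "HOL-Analysis.Analysis" "HOL-Library.Numeral_Type"
begin

text \<open>Coordinate components along the curve in a chart of the 4-manifold.
  Index type: the 4-element type 4. Upper-index vectors are functions 4 => real,
  rank-2 tensors 4 => 4 => real, Christoffel symbols Gam mu alpha beta stand for
  Gamma^mu_{alpha beta}, the Riemann tensor R k l m n has all indices down.\<close>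

type_synonym vec = "4 \<Rightarrow> real"
type_synonym ten2 = "4 \<Rightarrow> 4 \<Rightarrow> real"
type_synonym ten3 = "4 \<Rightarrow> 4 \<Rightarrow> 4 \<Rightarrow> real"
type_synonym ten4 = "4 \<Rightarrow> 4 \<Rightarrow> 4 \<Rightarrow> 4 \<Rightarrow> real"

definition lower :: "ten2 \<Rightarrow> vec \<Rightarrow> vec" where
  "lower g A \<mu> = (\<Sum>\<nu>\<in>UNIV. g \<mu> \<nu> * A \<nu>)"

definition minkowski :: ten2 where
  "minkowski a b = (if a = b then (if a = 0 then -1 else 1) else 0)"

text \<open>Lorentzian metric at a point: symmetric and of signature (-,+,+,+),
  i.e. it admits an orthonormal frame E (frame vector a has components E mu a).\<close>
definition lorentzian :: "ten2 \<Rightarrow> bool" where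
  "lorentzian g \<longleftrightarrow> (\<forall>\<mu> \<nu>. g \<mu> \<nu> = g \<nu> \<mu>) \<and>
     (\<exists>E :: ten2. \<forall>a b. (\<Sum>\<mu>\<in>UNIV. \<Sum>\<nu>\<in>UNIV. g \<mu> \<nu> * E \<mu> a * E \<nu> b) = minkowski a b)"

definition inverse_metric :: "ten2 \<Rightarrow> ten2 \<Rightarrow> bool" where
  "inverse_metric g gi \<longleftrightarrow> (\<forall>\<mu> \<nu>. (\<Sum>lm\<in>UNIV. g \<mu> lm * gi lm \<nu>) = (if \<mu> = \<nu> then 1 else 0))"

definition riemann_symmetries :: "ten4 \<Rightarrow> bool" where
  "riemann_symmetries R \<longleftrightarrow>
     (\<forall>k l m n. R k l m n = - R l k m n) \<and>
     (\<forall>k l m n. R k l m n = - R k l n m) \<and>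
     (\<forall>k l m n. R k l m n = R m n k l) \<and>
     (\<forall>k l m n. R k l m n + R k m n l + R k n l m = 0)"

text \<open>Covariant derivative along the curve (tangent v) of a vector field A
  with ordinary s-derivative A'.\<close>
definition covD_vec :: "ten3 \<Rightarrow> vec \<Rightarrow> vec \<Rightarrow> vec \<Rightarrow> vec" where
  "covD_vec Gam v A A' \<mu> = A' \<mu> + (\<Sum>\<alpha>\<in>UNIV. \<Sum>\<beta>\<in>UNIV. Gam \<mu> \<alpha> \<beta> * v \<alpha> * A \<beta>)"

definition covD_ten2 :: "ten3 \<Rightarrow> vec \<Rightarrow> ten2 \<Rightarrow> ten2 \<Rightarrow> ten2" where
  "covD_ten2 Gam v S S' \<mu> \<nu> = S' \<mu> \<nu>
     + (\<Sum>\<alpha>\<in>UNIV. \<Sum>\<beta>\<in>UNIV. Gam \<mu> \<alpha> \<beta> * v \<alpha> * S \<beta> \<nu>)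
     + (\<Sum>\<alpha>\<in>UNIV. \<Sum>\<beta>\<in>UNIV. Gam \<nu> \<alpha> \<beta> * v \<alpha> * S \<mu> \<beta>)"

definition force :: "ten2 \<Rightarrow> ten4 \<Rightarrow> vec \<Rightarrow> vec \<Rightarrow> ten2 \<Rightarrow> vec" where
  "force gi R v Dp S \<nu> = Dp \<nu> - (1/2) * (\<Sum>k\<in>UNIV. \<Sum>l\<in>UNIV. \<Sum>m\<in>UNIV. \<Sum>\<sigma>\<in>UNIV.
        S k l * v m * gi \<nu> \<sigma> * R k l m \<sigma>)"

text \<open>L^{kl} = delta S^{kl}/ds - 2 p^[k v^l] = delta S^{kl}/ds - (p^k v^l - p^l v^k)\<close>
definition torque :: "vec \<Rightarrow> vec \<Rightarrow> ten2 \<Rightarrow> ten2" where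
  "torque p v DS k l = DS k l - (p k * v l - p l * v k)"

end

theory Submission
  imports Defs
begin

lemma perm1:
  fixes f :: "'a::finite \<Rightarrow> 'a \<Rightarrow> 'a \<Rightarrow> 'a \<Rightarrow> real"
  shows "(\<Sum>b\<in>UNIV. \<Sum>a\<in>UNIV. \<Sum>n\<in>UNIV. \<Sum>c\<in>UNIV. f b a n c) = (\<Sum>n\<in>UNIV. \<Sum>a\<in>UNIV. \<Sum>c\<in>UNIV. \<Sum>b\<in>UNIV. f b a n c)"
proof -
  have "(\<Sum>b\<in>UNIV. \<Sum>a\<in>UNIV. \<Sum>n\<in>UNIV. \<Sum>c\<in>UNIV. f b a n c) = (\<Sum>a\<in>UNIV. \<Sum>b\<in>UNIV. \<Sum>n\<in>UNIV. \<Sum>c\<in>UNIV. f b a n c)"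
    by (rule sum.swap)
  also have "\<dots> = (\<Sum>a\<in>UNIV. \<Sum>n\<in>UNIV. \<Sum>b\<in>UNIV. \<Sum>c\<in>UNIV. f b a n c)"
    by (rule sum.cong[OF refl], rule sum.swap)
  also have "\<dots> = (\<Sum>a\<in>UNIV. \<Sum>n\<in>UNIV. \<Sum>c\<in>UNIV. \<Sum>b\<in>UNIV. f b a n c)"
    by (rule sum.cong[OF refl], rule sum.cong[OF refl], rule sum.swap)
  also have "\<dots> = (\<Sum>n\<in>UNIV. \<Sum>a\<in>UNIV. \<Sum>c\<in>UNIV. \<Sum>b\<in>UNIV. f b a n c)"
    by (rule sum.swap)
  finally show ?thesis .
qed

lemma perm2:
  fixes f :: "'a::finite \<Rightarrow> 'a \<Rightarrow> 'a \<Rightarrow> real"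
  shows "(\<Sum>b\<in>UNIV. \<Sum>a\<in>UNIV. \<Sum>c\<in>UNIV. f b a c) = (\<Sum>a\<in>UNIV. \<Sum>c\<in>UNIV. \<Sum>b\<in>UNIV. f b a c)"
proof -
  have "(\<Sum>b\<in>UNIV. \<Sum>a\<in>UNIV. \<Sum>c\<in>UNIV. f b a c) = (\<Sum>a\<in>UNIV. \<Sum>b\<in>UNIV. \<Sum>c\<in>UNIV. f b a c)"
    by (rule sum.swap)
  also have "\<dots> = (\<Sum>a\<in>UNIV. \<Sum>c\<in>UNIV. \<Sum>b\<in>UNIV. f b a c)"
    by (rule sum.cong[OF refl], rule sum.swap)
  finally show ?thesis .
qed

lemma deriv_core:
  fixes g g' S S' :: ten2 and Gam :: ten3 and v p p' :: vec and \<mu> :: 4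
  assumes mc: "\<And>\<mu> \<nu>. g' \<mu> \<nu> = (\<Sum>lm\<in>UNIV. \<Sum>\<alpha>\<in>UNIV. Gam lm \<alpha> \<mu> * v \<alpha> * g lm \<nu> + Gam lm \<alpha> \<nu> * v \<alpha> * g \<mu> lm)"
    and ssc: "\<And>\<beta>. (\<Sum>\<nu>\<in>UNIV. lower g p \<nu> * S \<beta> \<nu>) = 0"
    and d: "(\<Sum>\<nu>\<in>UNIV. \<Sum>a\<in>UNIV. g' \<nu> a * p a * S \<mu> \<nu> + g \<nu> a * p' a * S \<mu> \<nu> + g \<nu> a * p a * S' \<mu> \<nu>) = 0"
  shows "(\<Sum>\<nu>\<in>UNIV. lower g (covD_vec Gam v p p') \<nu> * S \<mu> \<nu>) + (\<Sum>\<nu>\<in>UNIV. lower g p \<nu> * covD_ten2 Gam v S S' \<mu> \<nu>) = 0"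
proof -
  define T1 where "T1 = (\<Sum>\<nu>\<in>UNIV. \<Sum>a\<in>UNIV. \<Sum>\<alpha>\<in>UNIV. \<Sum>\<beta>\<in>UNIV. g \<nu> a * p a * (Gam \<nu> \<alpha> \<beta> * v \<alpha> * S \<mu> \<beta>))"
  define T2 where "T2 = (\<Sum>\<nu>\<in>UNIV. \<Sum>a\<in>UNIV. \<Sum>\<alpha>\<in>UNIV. \<Sum>\<beta>\<in>UNIV. g \<nu> a * (Gam a \<alpha> \<beta> * v \<alpha> * p \<beta>) * S \<mu> \<nu>)"
  define Ex where "Ex = (\<Sum>\<alpha>\<in>UNIV. \<Sum>\<beta>\<in>UNIV. Gam \<mu> \<alpha> \<beta> * v \<alpha> * (\<Sum>\<nu>\<in>UNIV. lower g p \<nu> * S \<beta> \<nu>))"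
  have Ex0: "Ex = 0" unfolding Ex_def using ssc by simp
  have E1: "(\<Sum>\<nu>\<in>UNIV. lower g (covD_vec Gam v p p') \<nu> * S \<mu> \<nu>) =
      (\<Sum>\<nu>\<in>UNIV. \<Sum>a\<in>UNIV. g \<nu> a * p' a * S \<mu> \<nu>) + T2"
    unfolding T2_def lower_def covD_vec_def
    by (simp add: sum_distrib_left sum_distrib_right sum.distrib algebra_simps)
  have E2: "(\<Sum>\<nu>\<in>UNIV. lower g p \<nu> * covD_ten2 Gam v S S' \<mu> \<nu>) =
      (\<Sum>\<nu>\<in>UNIV. \<Sum>a\<in>UNIV. g \<nu> a * p a * S' \<mu> \<nu>) + Ex + T1"
  proof -
    have "(\<Sum>\<nu>\<in>UNIV. lower g p \<nu> * covD_ten2 Gam v S S' \<mu> \<nu>) =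
       (\<Sum>\<nu>\<in>UNIV. lower g p \<nu> * S' \<mu> \<nu>) + (\<Sum>\<nu>\<in>UNIV. lower g p \<nu> * (\<Sum>\<alpha>\<in>UNIV. \<Sum>\<beta>\<in>UNIV. Gam \<mu> \<alpha> \<beta> * v \<alpha> * S \<beta> \<nu>))
       + (\<Sum>\<nu>\<in>UNIV. lower g p \<nu> * (\<Sum>\<alpha>\<in>UNIV. \<Sum>\<beta>\<in>UNIV. Gam \<nu> \<alpha> \<beta> * v \<alpha> * S \<mu> \<beta>))"
      unfolding covD_ten2_def by (simp add: sum.distrib algebra_simps)
    moreover have "(\<Sum>\<nu>\<in>UNIV. lower g p \<nu> * S' \<mu> \<nu>) = (\<Sum>\<nu>\<in>UNIV. \<Sum>a\<in>UNIV. g \<nu> a * p a * S' \<mu> \<nu>)"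
      unfolding lower_def by (simp add: sum_distrib_right)
    moreover have "(\<Sum>\<nu>\<in>UNIV. lower g p \<nu> * (\<Sum>\<alpha>\<in>UNIV. \<Sum>\<beta>\<in>UNIV. Gam \<mu> \<alpha> \<beta> * v \<alpha> * S \<beta> \<nu>)) = Ex"
    proof -
      have "(\<Sum>\<nu>\<in>UNIV. lower g p \<nu> * (\<Sum>\<alpha>\<in>UNIV. \<Sum>\<beta>\<in>UNIV. Gam \<mu> \<alpha> \<beta> * v \<alpha> * S \<beta> \<nu>))
          = (\<Sum>\<nu>\<in>UNIV. \<Sum>\<alpha>\<in>UNIV. \<Sum>\<beta>\<in>UNIV. Gam \<mu> \<alpha> \<beta> * v \<alpha> * (lower g p \<nu> * S \<beta> \<nu>))"
        by (simp add: sum_distrib_left ac_simps)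
      also have "\<dots> = Ex" unfolding Ex_def by (subst perm2) (simp add: sum_distrib_left)
      finally show ?thesis .
    qed
    moreover have "(\<Sum>\<nu>\<in>UNIV. lower g p \<nu> * (\<Sum>\<alpha>\<in>UNIV. \<Sum>\<beta>\<in>UNIV. Gam \<nu> \<alpha> \<beta> * v \<alpha> * S \<mu> \<beta>)) = T1"
    proof -
      have "(\<Sum>\<nu>\<in>UNIV. lower g p \<nu> * (\<Sum>\<alpha>\<in>UNIV. \<Sum>\<beta>\<in>UNIV. Gam \<nu> \<alpha> \<beta> * v \<alpha> * S \<mu> \<beta>))
         = (\<Sum>\<nu>\<in>UNIV. \<Sum>\<alpha>\<in>UNIV. \<Sum>\<beta>\<in>UNIV. \<Sum>a\<in>UNIV. g \<nu> a * p a * (Gam \<nu> \<alpha> \<beta> * v \<alpha> * S \<mu> \<beta>))"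
        unfolding lower_def by (simp add: sum_distrib_left sum_distrib_right)
      also have "\<dots> = T1" unfolding T1_def by (rule sum.cong[OF refl], rule perm2[symmetric])
      finally show ?thesis .
    qed
    ultimately show ?thesis by simp
  qed
  have E3: "(\<Sum>\<nu>\<in>UNIV. \<Sum>a\<in>UNIV. g' \<nu> a * p a * S \<mu> \<nu>) = T1 + T2"
  proof -
    have "(\<Sum>\<nu>\<in>UNIV. \<Sum>a\<in>UNIV. g' \<nu> a * p a * S \<mu> \<nu>) =
      (\<Sum>\<nu>\<in>UNIV. \<Sum>a\<in>UNIV. \<Sum>lm\<in>UNIV. \<Sum>\<alpha>\<in>UNIV. Gam lm \<alpha> \<nu> * v \<alpha> * g lm a * p a * S \<mu> \<nu>)
     + (\<Sum>\<nu>\<in>UNIV. \<Sum>a\<in>UNIV. \<Sum>lm\<in>UNIV. \<Sum>\<alpha>\<in>UNIV. Gam lm \<alpha> a * v \<alpha> * g \<nu> lm * p a * S \<mu> \<nu>)"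
      unfolding mc by (simp add: sum_distrib_left sum_distrib_right sum.distrib algebra_simps)
    moreover have "(\<Sum>\<nu>\<in>UNIV. \<Sum>a\<in>UNIV. \<Sum>lm\<in>UNIV. \<Sum>\<alpha>\<in>UNIV. Gam lm \<alpha> \<nu> * v \<alpha> * g lm a * p a * S \<mu> \<nu>) = T1"
    proof -
      have "(\<Sum>\<nu>\<in>UNIV. \<Sum>a\<in>UNIV. \<Sum>lm\<in>UNIV. \<Sum>\<alpha>\<in>UNIV. Gam lm \<alpha> \<nu> * v \<alpha> * g lm a * p a * S \<mu> \<nu>)
         = (\<Sum>\<beta>\<in>UNIV. \<Sum>a\<in>UNIV. \<Sum>\<nu>\<in>UNIV. \<Sum>\<alpha>\<in>UNIV. g \<nu> a * p a * (Gam \<nu> \<alpha> \<beta> * v \<alpha> * S \<mu> \<beta>))"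
        by (simp add: ac_simps)
      also have "\<dots> = T1" unfolding T1_def by (rule perm1)
      finally show ?thesis .
    qed
    moreover have "(\<Sum>\<nu>\<in>UNIV. \<Sum>a\<in>UNIV. \<Sum>lm\<in>UNIV. \<Sum>\<alpha>\<in>UNIV. Gam lm \<alpha> a * v \<alpha> * g \<nu> lm * p a * S \<mu> \<nu>) = T2"
    proof -
      have "(\<Sum>\<nu>\<in>UNIV. \<Sum>a\<in>UNIV. \<Sum>lm\<in>UNIV. \<Sum>\<alpha>\<in>UNIV. Gam lm \<alpha> a * v \<alpha> * g \<nu> lm * p a * S \<mu> \<nu>)
         = (\<Sum>\<nu>\<in>UNIV. \<Sum>\<beta>\<in>UNIV. \<Sum>a\<in>UNIV. \<Sum>\<alpha>\<in>UNIV. g \<nu> a * (Gam a \<alpha> \<beta> * v \<alpha> * p \<beta>) * S \<mu> \<nu>)"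
        by (simp add: ac_simps)
      also have "\<dots> = T2" unfolding T2_def by (rule sum.cong[OF refl], rule perm2)
      finally show ?thesis .
    qed
    ultimately show ?thesis by simp
  qed
  have "(\<Sum>\<nu>\<in>UNIV. \<Sum>a\<in>UNIV. g' \<nu> a * p a * S \<mu> \<nu> + g \<nu> a * p' a * S \<mu> \<nu> + g \<nu> a * p a * S' \<mu> \<nu>)
     = (\<Sum>\<nu>\<in>UNIV. \<Sum>a\<in>UNIV. g' \<nu> a * p a * S \<mu> \<nu>) + (\<Sum>\<nu>\<in>UNIV. \<Sum>a\<in>UNIV. g \<nu> a * p' a * S \<mu> \<nu>)
      + (\<Sum>\<nu>\<in>UNIV. \<Sum>a\<in>UNIV. g \<nu> a * p a * S' \<mu> \<nu>)"
    by (simp add: sum.distrib)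
  with d E1 E2 E3 Ex0 show ?thesis by simp
qed

lemma pf_zero:
  fixes S :: ten2 and w :: vec
  assumes as: "\<And>a b. S a b = - S b a"
    and ker: "\<And>\<mu>. (\<Sum>\<nu>\<in>UNIV. w \<nu> * S \<mu> \<nu>) = 0"
    and wnz: "\<exists>c. w c \<noteq> 0"
  shows "S 1 2 * S 3 4 - S 1 3 * S 2 4 + S 1 4 * S 2 3 = 0"
proof -
  have k: "w 1 * S m 1 + w 2 * S m 2 + w 3 * S m 3 + w 4 * S m 4 = 0" for m
    using ker[of m] by (simp add: sum_4)
  have d: "S i i = 0" for i using as[of i i] by simp
  define Pf where "Pf = S 1 2 * S 3 4 - S 1 3 * S 2 4 + S 1 4 * S 2 3"
  have "Pf * w c = 0" for c
  proof -
    note k1 = k[of 1] and k2 = k[of 2] and k3 = k[of 3] and k4 = k[of 4]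
    note a = as[of 2 1] as[of 3 1] as[of 4 1] as[of 3 2] as[of 4 2] as[of 4 3]
    have "Pf * w 1 = 0" using k1 k2 k3 k4 a d[of 1] d[of 2] d[of 3] d[of 4] unfolding Pf_def by algebra
    moreover have "Pf * w 2 = 0" using k1 k2 k3 k4 a d[of 1] d[of 2] d[of 3] d[of 4] unfolding Pf_def by algebra
    moreover have "Pf * w 3 = 0" using k1 k2 k3 k4 a d[of 1] d[of 2] d[of 3] d[of 4] unfolding Pf_def by algebra
    moreover have "Pf * w 4 = 0" using k1 k2 k3 k4 a d[of 1] d[of 2] d[of 3] d[of 4] unfolding Pf_def by algebra
    ultimately show ?thesis by (metis exhaust_4)
  qed
  moreover obtain c where "w c \<noteq> 0" using wnz by auto
  ultimately show ?thesis unfolding Pf_def by (metis mult_eq_0_iff)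
qed

lemma plucker_all:
  fixes S :: ten2 and w :: vec
  assumes as: "\<And>a b. S a b = - S b a"
    and ker: "\<And>\<mu>. (\<Sum>\<nu>\<in>UNIV. w \<nu> * S \<mu> \<nu>) = 0"
    and wnz: "\<exists>c. w c \<noteq> 0"
  shows "S a b * S c d - S a c * S b d + S a d * S b c = 0"
proof -
  have pf: "S 1 2 * S 3 4 - S 1 3 * S 2 4 + S 1 4 * S 2 3 = 0" by (rule pf_zero[OF as ker wnz])
  have d: "S i i = 0" for i using as[of i i] by simp
  note a = as[of 2 1] as[of 3 1] as[of 4 1] as[of 3 2] as[of 4 2] as[of 4 3] d[of 1] d[of 2] d[of 3] d[of 4]
  show ?thesis
    using exhaust_4[of a] exhaust_4[of b] exhaust_4[of c] exhaust_4[of d]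
    apply (elim disjE) apply (simp_all add: a)
    using pf apply (simp_all add: algebra_simps)
    done
qed

lemma contract:
  fixes S A :: ten2
  assumes P: "\<And>a b c d. S a b * S c d - S a c * S b d + S a d * S b c = 0"
    and Aas: "\<And>x y. A x y = - A y x"
  shows "(\<Sum>\<nu>\<in>UNIV. \<Sum>\<tau>\<in>UNIV. S \<mu> \<nu> * S \<tau> \<rho> * A \<nu> \<tau>) = - (1/2) * (\<Sum>m\<in>UNIV. \<Sum>\<nu>\<in>UNIV. S m \<nu> * A m \<nu>) * S \<mu> \<rho>"
proof -
  define LHS where "LHS = (\<Sum>\<nu>\<in>UNIV. \<Sum>\<tau>\<in>UNIV. S \<mu> \<nu> * S \<tau> \<rho> * A \<nu> \<tau>)"
  define B where "B = (\<Sum>m\<in>UNIV. \<Sum>\<nu>\<in>UNIV. S m \<nu> * A m \<nu>)"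
  have "LHS = (\<Sum>\<nu>\<in>UNIV. \<Sum>\<tau>\<in>UNIV. S \<mu> \<tau> * S \<nu> \<rho> * A \<nu> \<tau> - S \<mu> \<rho> * (S \<nu> \<tau> * A \<nu> \<tau>))"
    unfolding LHS_def
  proof (intro sum.cong refl)
    fix \<nu> \<tau>
    have e: "S \<mu> \<nu> * S \<tau> \<rho> = S \<mu> \<tau> * S \<nu> \<rho> - S \<mu> \<rho> * S \<nu> \<tau>" using P[of \<mu> \<nu> \<tau> \<rho>] by simp
    show "S \<mu> \<nu> * S \<tau> \<rho> * A \<nu> \<tau> = S \<mu> \<tau> * S \<nu> \<rho> * A \<nu> \<tau> - S \<mu> \<rho> * (S \<nu> \<tau> * A \<nu> \<tau>)"
      by (simp only: e) (simp add: algebra_simps)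
  qed
  also have "\<dots> = (\<Sum>\<nu>\<in>UNIV. \<Sum>\<tau>\<in>UNIV. S \<mu> \<tau> * S \<nu> \<rho> * A \<nu> \<tau>) - S \<mu> \<rho> * B"
    unfolding B_def by (simp add: sum_subtractf sum_distrib_left)
  also have "(\<Sum>\<nu>\<in>UNIV. \<Sum>\<tau>\<in>UNIV. S \<mu> \<tau> * S \<nu> \<rho> * A \<nu> \<tau>) = (\<Sum>\<tau>\<in>UNIV. \<Sum>\<nu>\<in>UNIV. S \<mu> \<tau> * S \<nu> \<rho> * A \<nu> \<tau>)"
    by (rule sum.swap)
  also have "\<dots> = (\<Sum>\<nu>\<in>UNIV. \<Sum>\<tau>\<in>UNIV. - (S \<mu> \<nu> * S \<tau> \<rho> * A \<nu> \<tau>))"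
    by (intro sum.cong refl) (subst Aas, simp)
  also have "\<dots> = - LHS" unfolding LHS_def by (simp add: sum_negf)
  finally have "LHS = - LHS - S \<mu> \<rho> * B" .
  then show ?thesis unfolding LHS_def[symmetric] B_def[symmetric] by (simp add: algebra_simps)
qed

lemma perm3:
  fixes f :: "'a::finite \<Rightarrow> 'a \<Rightarrow> 'a \<Rightarrow> 'a \<Rightarrow> real"
  shows "(\<Sum>a\<in>UNIV. \<Sum>b\<in>UNIV. \<Sum>c\<in>UNIV. \<Sum>d\<in>UNIV. f a b c d) = (\<Sum>d\<in>UNIV. \<Sum>a\<in>UNIV. \<Sum>b\<in>UNIV. \<Sum>c\<in>UNIV. f a b c d)"
proof -
  have "(\<Sum>a\<in>UNIV. \<Sum>b\<in>UNIV. \<Sum>c\<in>UNIV. \<Sum>d\<in>UNIV. f a b c d) = (\<Sum>a\<in>UNIV. \<Sum>b\<in>UNIV. \<Sum>d\<in>UNIV. \<Sum>c\<in>UNIV. f a b c d)"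
    by (rule sum.cong[OF refl], rule sum.cong[OF refl], rule sum.swap)
  also have "\<dots> = (\<Sum>a\<in>UNIV. \<Sum>d\<in>UNIV. \<Sum>b\<in>UNIV. \<Sum>c\<in>UNIV. f a b c d)"
    by (rule sum.cong[OF refl], rule sum.swap)
  also have "\<dots> = (\<Sum>d\<in>UNIV. \<Sum>a\<in>UNIV. \<Sum>b\<in>UNIV. \<Sum>c\<in>UNIV. f a b c d)"
    by (rule sum.swap)
  finally show ?thesis .
qed

lemma perm4:
  fixes f :: "'a::finite \<Rightarrow> 'a \<Rightarrow> 'a \<Rightarrow> 'a \<Rightarrow> real"
  shows "(\<Sum>a\<in>UNIV. \<Sum>b\<in>UNIV. \<Sum>c\<in>UNIV. \<Sum>d\<in>UNIV. f a b c d) = (\<Sum>c\<in>UNIV. \<Sum>d\<in>UNIV. \<Sum>a\<in>UNIV. \<Sum>b\<in>UNIV. f a b c d)"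
proof -
  have "(\<Sum>a\<in>UNIV. \<Sum>b\<in>UNIV. \<Sum>c\<in>UNIV. \<Sum>d\<in>UNIV. f a b c d) = (\<Sum>c\<in>UNIV. \<Sum>a\<in>UNIV. \<Sum>b\<in>UNIV. \<Sum>d\<in>UNIV. f a b c d)"
  proof -
    have "(\<Sum>a\<in>UNIV. \<Sum>b\<in>UNIV. \<Sum>c\<in>UNIV. \<Sum>d\<in>UNIV. f a b c d) = (\<Sum>a\<in>UNIV. \<Sum>c\<in>UNIV. \<Sum>b\<in>UNIV. \<Sum>d\<in>UNIV. f a b c d)"
      by (rule sum.cong[OF refl], rule sum.swap)
    also have "\<dots> = (\<Sum>c\<in>UNIV. \<Sum>a\<in>UNIV. \<Sum>b\<in>UNIV. \<Sum>d\<in>UNIV. f a b c d)"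
      by (rule sum.swap)
    finally show ?thesis .
  qed
  also have "\<dots> = (\<Sum>c\<in>UNIV. \<Sum>d\<in>UNIV. \<Sum>a\<in>UNIV. \<Sum>b\<in>UNIV. f a b c d)"
    by (rule sum.cong[OF refl], rule perm2[symmetric])
  finally show ?thesis .
qed

theorem mainTheorem9:
  fixes I :: "real set"
    and g gi :: "real \<Rightarrow> ten2"           \<comment> \<open>metric g_{mu nu} and inverse metric along the curve\<close>
    and g' :: "real \<Rightarrow> ten2"              \<comment> \<open>s-derivative of g_{mu nu}(z(s))\<close>
    and Gam :: "real \<Rightarrow> ten3"             \<comment> \<open>Christoffel symbols Gamma^mu_{ab}(z(s))\<close>
    and R :: "real \<Rightarrow> ten4"               \<comment> \<open>Riemann tensor R_{klmn}(z(s))\<close>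
    and z v :: "real \<Rightarrow> vec"               \<comment> \<open>curve and its tangent\<close>
    and p p' u u' :: "real \<Rightarrow> vec"
    and S S' :: "real \<Rightarrow> ten2"
    and M M' :: "real \<Rightarrow> real"
    and s :: real
  assumes I_open: "open I"
    and z_C1: "\<And>t \<mu>. t \<in> I \<Longrightarrow> ((\<lambda>r. z r \<mu>) has_real_derivative v t \<mu>) (at t)"
    and v_cont: "\<And>\<mu>. continuous_on I (\<lambda>r. v r \<mu>)"
    and g_lor: "\<And>t. t \<in> I \<Longrightarrow> lorentzian (g t)"
    and g_inv: "\<And>t. t \<in> I \<Longrightarrow> inverse_metric (g t) (gi t)"
    and Gam_sym: "\<And>t \<mu> \<alpha> \<beta>. t \<in> I \<Longrightarrow> Gam t \<mu> \<alpha> \<beta> = Gam t \<mu> \<beta> \<alpha>"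
    and g_deriv: "\<And>t \<mu> \<nu>. t \<in> I \<Longrightarrow> ((\<lambda>r. g r \<mu> \<nu>) has_real_derivative g' t \<mu> \<nu>) (at t)"
    and metric_compat: "\<And>t \<mu> \<nu>. t \<in> I \<Longrightarrow> g' t \<mu> \<nu> =
        (\<Sum>lm\<in>UNIV. \<Sum>\<alpha>\<in>UNIV. Gam t lm \<alpha> \<mu> * v t \<alpha> * g t lm \<nu> + Gam t lm \<alpha> \<nu> * v t \<alpha> * g t \<mu> lm)"
    and R_sym: "\<And>t. t \<in> I \<Longrightarrow> riemann_symmetries (R t)"
    and p_deriv: "\<And>t \<mu>. t \<in> I \<Longrightarrow> ((\<lambda>r. p r \<mu>) has_real_derivative p' t \<mu>) (at t)"
    and S_deriv: "\<And>t \<mu> \<nu>. t \<in> I \<Longrightarrow> ((\<lambda>r. S r \<mu> \<nu>) has_real_derivative S' t \<mu> \<nu>) (at t)"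
    and u_deriv: "\<And>t \<mu>. t \<in> I \<Longrightarrow> ((\<lambda>r. u r \<mu>) has_real_derivative u' t \<mu>) (at t)"
    and M_deriv: "\<And>t. t \<in> I \<Longrightarrow> (M has_real_derivative M' t) (at t)"
    and S_antisym: "\<And>t \<mu> \<nu>. t \<in> I \<Longrightarrow> S t \<mu> \<nu> = - S t \<nu> \<mu>"
    and u_unit: "\<And>t. t \<in> I \<Longrightarrow> (\<Sum>\<mu>\<in>UNIV. lower (g t) (u t) \<mu> * u t \<mu>) = -1"
    and M_pos: "\<And>t. t \<in> I \<Longrightarrow> M t > 0"
    and p_Mu: "\<And>t \<mu>. t \<in> I \<Longrightarrow> p t \<mu> = M t * u t \<mu>"
    and SSC: "\<And>t \<mu>. t \<in> I \<Longrightarrow> (\<Sum>\<nu>\<in>UNIV. lower (g t) (p t) \<nu> * S t \<mu> \<nu>) = 0"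
    and uv: "\<And>t. t \<in> I \<Longrightarrow> (\<Sum>\<kappa>\<in>UNIV. lower (g t) (u t) \<kappa> * v t \<kappa>) = -1"
    and s_in: "s \<in> I"
    and denom_nz: "M s ^ 2 + (1/4) * (\<Sum>\<kappa>\<in>UNIV. \<Sum>lm\<in>UNIV. \<Sum>\<tau>\<in>UNIV. \<Sum>\<nu>\<in>UNIV.
                     S s \<kappa> lm * S s \<tau> \<nu> * R s \<kappa> lm \<tau> \<nu>) \<noteq> 0"
  shows "let F = force (gi s) (R s) (v s) (covD_vec (Gam s) (v s) (p s) (p' s)) (S s);
             L = torque (p s) (v s) (covD_ten2 (Gam s) (v s) (S s) (S' s));
             ul = lower (g s) (u s);
             Fl = lower (g s) F;
             W = (\<lambda>\<tau>. p s \<tau> - (\<Sum>\<sigma>\<in>UNIV. ul \<sigma> * L \<tau> \<sigma>));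
             D = M s ^ 2 + (1/4) * (\<Sum>\<kappa>\<in>UNIV. \<Sum>lm\<in>UNIV. \<Sum>\<tau>\<in>UNIV. \<Sum>\<nu>\<in>UNIV.
                     S s \<kappa> lm * S s \<tau> \<nu> * R s \<kappa> lm \<tau> \<nu>)
         in \<forall>\<mu>. M s * v s \<mu> =
              p s \<mu> - (\<Sum>\<nu>\<in>UNIV. ul \<nu> * L \<mu> \<nu>)
              - (\<Sum>\<nu>\<in>UNIV. S s \<mu> \<nu> * (M s * Fl \<nu>
                   - (1/2) * (\<Sum>\<kappa>\<in>UNIV. \<Sum>lm\<in>UNIV. \<Sum>\<tau>\<in>UNIV.
                        S s \<kappa> lm * W \<tau> * R s \<kappa> lm \<nu> \<tau>))) / D"
proof -
  define Dp where "Dp = covD_vec (Gam s) (v s) (p s) (p' s)"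
  define DS where "DS = covD_ten2 (Gam s) (v s) (S s) (S' s)"
  define ul where "ul = lower (g s) (u s)"
  define Gl where "Gl = lower (g s) Dp"
  define Fl where "Fl = lower (g s) (force (gi s) (R s) (v s) Dp (S s))"
  define L where "L = torque (p s) (v s) DS"
  define X where "X = (\<lambda>\<mu>. \<Sum>\<nu>\<in>UNIV. ul \<nu> * DS \<mu> \<nu>)"
  define B where "B = (\<Sum>\<kappa>\<in>UNIV. \<Sum>lm\<in>UNIV. \<Sum>\<tau>\<in>UNIV. \<Sum>\<nu>\<in>UNIV. S s \<kappa> lm * S s \<tau> \<nu> * R s \<kappa> lm \<tau> \<nu>)"
  define D where "D = M s ^ 2 + (1/4) * B"
  define W where "W = (\<lambda>\<tau>. p s \<tau> - (\<Sum>\<sigma>\<in>UNIV. ul \<sigma> * L \<tau> \<sigma>))"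
  have Mpos: "M s > 0" using M_pos[OF s_in] .
  have Sas: "\<And>a b. S s a b = - S s b a" using S_antisym[OF s_in] .
  have Rs: "riemann_symmetries (R s)" using R_sym[OF s_in] .
  have Ras: "\<And>k l m n. R s k l m n = - R s k l n m" using Rs unfolding riemann_symmetries_def by blast
  have Pl: "\<And>\<nu>. lower (g s) (p s) \<nu> = M s * ul \<nu>"
    unfolding ul_def lower_def by (simp add: p_Mu[OF s_in] sum_distrib_left ac_simps)
  have ker: "\<And>\<beta>. (\<Sum>\<nu>\<in>UNIV. ul \<nu> * S s \<beta> \<nu>) = 0"
  proof -
    fix \<beta>
    have "M s * (\<Sum>\<nu>\<in>UNIV. ul \<nu> * S s \<beta> \<nu>) = 0"
      using SSC[OF s_in, of \<beta>] by (simp add: Pl sum_distrib_left ac_simps)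
    then show "(\<Sum>\<nu>\<in>UNIV. ul \<nu> * S s \<beta> \<nu>) = 0" using Mpos by simp
  qed
  have wnz: "\<exists>c. ul c \<noteq> 0"
  proof (rule ccontr)
    assume "\<not> (\<exists>c. ul c \<noteq> 0)"
    then have "(\<Sum>\<mu>\<in>UNIV. ul \<mu> * u s \<mu>) = 0" by simp
    with u_unit[OF s_in] show False unfolding ul_def by simp
  qed
  have Pluck: "\<And>a b c d. S s a b * S s c d - S s a c * S s b d + S s a d * S s b c = 0"
    by (rule plucker_all[OF Sas ker wnz])
  have d0: "(\<Sum>\<nu>\<in>UNIV. Gl \<nu> * S s \<mu>' \<nu>) + (\<Sum>\<nu>\<in>UNIV. lower (g s) (p s) \<nu> * DS \<mu>' \<nu>) = 0" for \<mu>'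
  proof -
    have hd: "((\<lambda>t. \<Sum>\<nu>\<in>UNIV. \<Sum>a\<in>UNIV. g t \<nu> a * p t a * S t \<mu>' \<nu>) has_real_derivative
      (\<Sum>\<nu>\<in>UNIV. \<Sum>a\<in>UNIV. g' s \<nu> a * p s a * S s \<mu>' \<nu> + g s \<nu> a * p' s a * S s \<mu>' \<nu> + g s \<nu> a * p s a * S' s \<mu>' \<nu>)) (at s)"
      by (auto intro!: derivative_eq_intros g_deriv[OF s_in] p_deriv[OF s_in] S_deriv[OF s_in] sum.cong simp: algebra_simps)
    have f0: "\<And>t. t \<in> I \<Longrightarrow> 0 = (\<Sum>\<nu>\<in>UNIV. \<Sum>a\<in>UNIV. g t \<nu> a * p t a * S t \<mu>' \<nu>)"
      using SSC unfolding lower_def by (simp add: sum_distrib_right)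
    have h0: "((\<lambda>t. \<Sum>\<nu>\<in>UNIV. \<Sum>a\<in>UNIV. g t \<nu> a * p t a * S t \<mu>' \<nu>) has_real_derivative 0) (at s)"
      by (rule has_field_derivative_transform_within_open[OF DERIV_const I_open s_in f0])
    have "(\<Sum>\<nu>\<in>UNIV. \<Sum>a\<in>UNIV. g' s \<nu> a * p s a * S s \<mu>' \<nu> + g s \<nu> a * p' s a * S s \<mu>' \<nu> + g s \<nu> a * p s a * S' s \<mu>' \<nu>) = 0"
      using DERIV_unique[OF hd h0] .
    then show ?thesis unfolding Gl_def Dp_def DS_def
      by (rule deriv_core[OF metric_compat[OF s_in] SSC[OF s_in]])
  qed
  define Qv where "Qv = (\<lambda>\<nu>. \<Sum>k\<in>UNIV. \<Sum>l\<in>UNIV. \<Sum>m\<in>UNIV. S s k l * v s m * R s k l m \<nu>)"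
  have Gl_eq: "Gl \<nu> = Fl \<nu> + 1/2 * Qv \<nu>" for \<nu>
  proof -
    have T4: "(\<Sum>k\<in>UNIV. \<Sum>l\<in>UNIV. \<Sum>m\<in>UNIV. \<Sum>\<sigma>\<in>UNIV. S s k l * v s m * gi s a \<sigma> * R s k l m \<sigma>)
        = (\<Sum>\<sigma>\<in>UNIV. gi s a \<sigma> * Qv \<sigma>)" for a
      unfolding Qv_def by (subst perm3) (simp add: sum_distrib_left ac_simps)
    have "(\<Sum>a\<in>UNIV. g s \<nu> a * (\<Sum>\<sigma>\<in>UNIV. gi s a \<sigma> * Qv \<sigma>)) = (\<Sum>\<sigma>\<in>UNIV. (\<Sum>a\<in>UNIV. g s \<nu> a * gi s a \<sigma>) * Qv \<sigma>)"
      by (simp add: sum_distrib_left sum_distrib_right ac_simps) (rule sum.swap)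
    also have "\<dots> = (\<Sum>\<sigma>\<in>UNIV. (if \<nu> = \<sigma> then Qv \<sigma> else 0))"
      using g_inv[OF s_in] unfolding inverse_metric_def by (intro sum.cong refl) simp
    also have "\<dots> = Qv \<nu>" by simp
    finally have e: "(\<Sum>a\<in>UNIV. g s \<nu> a * (\<Sum>\<sigma>\<in>UNIV. gi s a \<sigma> * Qv \<sigma>)) = Qv \<nu>" .
    have "Fl \<nu> = Gl \<nu> - 1/2 * (\<Sum>a\<in>UNIV. g s \<nu> a * (\<Sum>\<sigma>\<in>UNIV. gi s a \<sigma> * Qv \<sigma>))"
      unfolding Fl_def Gl_def lower_def force_def T4
      by (simp add: right_diff_distrib sum_subtractf sum_distrib_left)
    then show ?thesis using e by simp
  qed
  have MX: "M s * X \<mu>' = - (\<Sum>\<nu>\<in>UNIV. Gl \<nu> * S s \<mu>' \<nu>)" for \<mu>'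
    using d0[of \<mu>'] unfolding X_def by (simp add: Pl sum_distrib_left ac_simps)
  define y where "y = (\<lambda>\<rho>. - Gl \<rho> / M s)"
  have Xy: "X \<tau> = (\<Sum>\<rho>\<in>UNIV. S s \<tau> \<rho> * y \<rho>)" for \<tau>
  proof -
    have "X \<tau> = - (\<Sum>\<nu>\<in>UNIV. Gl \<nu> * S s \<tau> \<nu>) / M s" using MX[of \<tau>] Mpos by (simp add: field_simps)
    then show ?thesis unfolding y_def by (simp add: sum_divide_distrib sum_negf[symmetric] ac_simps)
  qed
  have uvs: "(\<Sum>\<nu>\<in>UNIV. ul \<nu> * v s \<nu>) = -1" using uv[OF s_in] unfolding ul_def .
  have ups: "(\<Sum>\<nu>\<in>UNIV. ul \<nu> * p s \<nu>) = - M s"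
  proof -
    have "(\<Sum>\<nu>\<in>UNIV. ul \<nu> * p s \<nu>) = M s * (\<Sum>\<nu>\<in>UNIV. ul \<nu> * u s \<nu>)"
      by (simp add: p_Mu[OF s_in] sum_distrib_left ac_simps)
    then show ?thesis using u_unit[OF s_in] unfolding ul_def by simp
  qed
  have Lsum: "(\<Sum>\<nu>\<in>UNIV. ul \<nu> * L \<mu>' \<nu>) = X \<mu>' + p s \<mu>' - M s * v s \<mu>'" for \<mu>'
  proof -
    have "(\<Sum>\<nu>\<in>UNIV. ul \<nu> * L \<mu>' \<nu>) = X \<mu>' - p s \<mu>' * (\<Sum>\<nu>\<in>UNIV. ul \<nu> * v s \<nu>) + v s \<mu>' * (\<Sum>\<nu>\<in>UNIV. ul \<nu> * p s \<nu>)"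
      unfolding L_def torque_def X_def
      by (simp add: algebra_simps sum.distrib sum_subtractf sum_distrib_left)
    then show ?thesis using uvs ups by simp
  qed
  have hW: "W \<tau> = M s * v s \<tau> - X \<tau>" for \<tau> unfolding W_def using Lsum[of \<tau>] by simp
  define A where "A = (\<lambda>\<nu> \<tau>. \<Sum>k\<in>UNIV. \<Sum>l\<in>UNIV. S s k l * R s k l \<nu> \<tau>)"
  have Aas: "A x z = - A z x" for x z
    unfolding A_def by (simp add: Ras[of _ _ x z] sum_negf)
  define Zx where "Zx = (\<lambda>\<nu>. \<Sum>\<kappa>\<in>UNIV. \<Sum>lm\<in>UNIV. \<Sum>\<tau>\<in>UNIV. S s \<kappa> lm * X \<tau> * R s \<kappa> lm \<nu> \<tau>)"
  define Zv where "Zv = (\<lambda>\<nu>. \<Sum>\<kappa>\<in>UNIV. \<Sum>lm\<in>UNIV. \<Sum>\<tau>\<in>UNIV. S s \<kappa> lm * v s \<tau> * R s \<kappa> lm \<nu> \<tau>)"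
  have QZ: "Qv \<nu> = - Zv \<nu>" for \<nu>
    unfolding Qv_def Zv_def by (simp add: Ras[of _ _ _ \<nu>] sum_negf)
  have ZW: "(\<Sum>\<kappa>\<in>UNIV. \<Sum>lm\<in>UNIV. \<Sum>\<tau>\<in>UNIV. S s \<kappa> lm * W \<tau> * R s \<kappa> lm \<nu> \<tau>) = M s * Zv \<nu> - Zx \<nu>" for \<nu>
    unfolding Zv_def Zx_def hW by (simp add: algebra_simps sum_subtractf sum_distrib_left)
  have BA: "(\<Sum>m\<in>UNIV. \<Sum>\<nu>\<in>UNIV. S s m \<nu> * A m \<nu>) = B"
  proof -
    have "(\<Sum>m\<in>UNIV. \<Sum>\<nu>\<in>UNIV. S s m \<nu> * A m \<nu>) = (\<Sum>m\<in>UNIV. \<Sum>\<nu>\<in>UNIV. \<Sum>\<kappa>\<in>UNIV. \<Sum>lm\<in>UNIV. S s \<kappa> lm * S s m \<nu> * R s \<kappa> lm m \<nu>)"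
      unfolding A_def by (simp add: sum_distrib_left ac_simps)
    also have "\<dots> = B" unfolding B_def by (rule perm4)
    finally show ?thesis .
  qed
  have Y2: "(\<Sum>\<nu>\<in>UNIV. S s \<mu>' \<nu> * Zx \<nu>) = - (1/2) * B * X \<mu>'" for \<mu>'
  proof -
    have "(\<Sum>\<nu>\<in>UNIV. S s \<mu>' \<nu> * Zx \<nu>) = (\<Sum>\<nu>\<in>UNIV. \<Sum>\<tau>\<in>UNIV. \<Sum>\<rho>\<in>UNIV. y \<rho> * (S s \<mu>' \<nu> * S s \<tau> \<rho> * A \<nu> \<tau>))"
    proof (rule sum.cong[OF refl])
      fix \<nu>
      have "Zx \<nu> = (\<Sum>\<tau>\<in>UNIV. \<Sum>\<kappa>\<in>UNIV. \<Sum>lm\<in>UNIV. S s \<kappa> lm * X \<tau> * R s \<kappa> lm \<nu> \<tau>)"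
        unfolding Zx_def by (rule perm2[symmetric])
      also have "\<dots> = (\<Sum>\<tau>\<in>UNIV. X \<tau> * A \<nu> \<tau>)" unfolding A_def by (simp add: sum_distrib_left ac_simps)
      finally show "S s \<mu>' \<nu> * Zx \<nu> = (\<Sum>\<tau>\<in>UNIV. \<Sum>\<rho>\<in>UNIV. y \<rho> * (S s \<mu>' \<nu> * S s \<tau> \<rho> * A \<nu> \<tau>))"
        unfolding Xy by (simp add: sum_distrib_left sum_distrib_right ac_simps)
    qed
    also have "\<dots> = (\<Sum>\<rho>\<in>UNIV. \<Sum>\<nu>\<in>UNIV. \<Sum>\<tau>\<in>UNIV. y \<rho> * (S s \<mu>' \<nu> * S s \<tau> \<rho> * A \<nu> \<tau>))"
      by (rule perm2[symmetric])
    also have "\<dots> = (\<Sum>\<rho>\<in>UNIV. y \<rho> * (\<Sum>\<nu>\<in>UNIV. \<Sum>\<tau>\<in>UNIV. S s \<mu>' \<nu> * S s \<tau> \<rho> * A \<nu> \<tau>))"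
      by (simp add: sum_distrib_left)
    also have "\<dots> = (\<Sum>\<rho>\<in>UNIV. y \<rho> * (- (1/2) * B * S s \<mu>' \<rho>))"
      using contract[where S="S s" and A=A and \<mu>=\<mu>', OF Pluck Aas] BA by simp
    also have "\<dots> = - (1/2) * B * X \<mu>'" unfolding Xy by (simp add: sum_distrib_left ac_simps)
    finally show ?thesis .
  qed
  have Nexp: "(\<Sum>\<nu>\<in>UNIV. S s \<mu>' \<nu> * (M s * Fl \<nu> - (1/2) * (\<Sum>\<kappa>\<in>UNIV. \<Sum>lm\<in>UNIV. \<Sum>\<tau>\<in>UNIV.
        S s \<kappa> lm * W \<tau> * R s \<kappa> lm \<nu> \<tau>))) = - D * X \<mu>'" for \<mu>'
  proof -
    have "(\<Sum>\<nu>\<in>UNIV. S s \<mu>' \<nu> * (M s * Fl \<nu> - (1/2) * (\<Sum>\<kappa>\<in>UNIV. \<Sum>lm\<in>UNIV. \<Sum>\<tau>\<in>UNIV.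
        S s \<kappa> lm * W \<tau> * R s \<kappa> lm \<nu> \<tau>)))
      = (\<Sum>\<nu>\<in>UNIV. M s * (Gl \<nu> * S s \<mu>' \<nu>) + 1/2 * (S s \<mu>' \<nu> * Zx \<nu>))"
      by (rule sum.cong[OF refl]) (simp only: ZW Gl_eq QZ, simp add: algebra_simps)
    also have "\<dots> = M s * (M s * X \<mu>') * (-1) + 1/2 * (- (1/2) * B * X \<mu>')"
      by (simp only: sum.distrib sum_distrib_left[symmetric] MX Y2)
    also have "\<dots> = - D * X \<mu>'" unfolding D_def by (simp add: algebra_simps power2_eq_square)
    finally show ?thesis .
  qed
  have Dnz: "D \<noteq> 0" using denom_nz unfolding D_def B_def .
  have main: "M s * v s \<mu>' = p s \<mu>' - (\<Sum>\<nu>\<in>UNIV. ul \<nu> * L \<mu>' \<nu>)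
              - (\<Sum>\<nu>\<in>UNIV. S s \<mu>' \<nu> * (M s * Fl \<nu>
                   - (1/2) * (\<Sum>\<kappa>\<in>UNIV. \<Sum>lm\<in>UNIV. \<Sum>\<tau>\<in>UNIV.
                        S s \<kappa> lm * W \<tau> * R s \<kappa> lm \<nu> \<tau>))) / D" for \<mu>'
    unfolding Nexp Lsum using Dnz by simp
  show ?thesis unfolding Let_def using main unfolding Dp_def DS_def ul_def Gl_def Fl_def L_def W_def D_def B_def by blast
qed

end
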